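(* Let $\sigma\in C(\mathbb{R},\mathbb{R})$ be a function which is not a polynomial, and let $\mathbf{F}_\sigma$ be the family of all kernels on $\mathbb{R}^n\times\mathbb{R}^n$ of the form \[ \mathbf{k}(x,y\,|\,\theta)=\sum_{j=1}^{m}c_j\,\sigma(\langle x,w_j\rangle+b_j)\,\sigma(\langle y,w_j\rangle+b_j), \] where $\theta=(c,w,b)$, $m\in\mathbb{N}$, $c_j>0$, $b_j\in\mathbb{R}$, $w_j\in\mathbb{R}^n$. Then $\mathbf{F}_\sigma$ is universal: for every continuous $f:\mathbb{R}^n\to\mathbb{R}$, every compact $K\subset\mathbb{R}^n$ and every $\epsilon>0$ there exist $\mathbf{k}\in\mathbf{F}_\sigma$, an integer $s\in\mathbb{N}$, coefficients $d_1,\dots,d_s\in\mathbb{R}$ and points $x_1,\dots,x_s\in\mathbb{R}^n$ such that \[ \sup_{x\in K}\Big|f(x)-\sum_{l=1}^{s}d_l\,\mathbf{k}(x,x_l)\Big|<\epsilon . \]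
   Context: $\langle\cdot,\cdot\rangle$ denotes the standard inner product on $\mathbb{R}^n$. *)

theory Defs
  imports "HOL-Analysis.Analysis" "HOL-Computational_Algebra.Polynomial"
begin

definition is_polynomial_fun :: "(real \<Rightarrow> real) \<Rightarrow> bool" where
  "is_polynomial_fun \<sigma> \<longleftrightarrow> (\<exists>p :: real poly. \<forall>t. \<sigma> t = poly p t)"

definition kernel_family :: "(real \<Rightarrow> real) \<Rightarrow> (real^'n \<Rightarrow> real^'n \<Rightarrow> real) set" where
  "kernel_family \<sigma> = {k. \<exists>(m::nat) (c::nat \<Rightarrow> real) (w::nat \<Rightarrow> real^'n) (b::nat \<Rightarrow> real).
      (\<forall>j<m. c j > 0) \<and>
      k = (\<lambda>x y. \<Sum>j<m. c j * \<sigma> (inner x (w j) + b j) * \<sigma> (inner y (w j) + b j))}"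

end

theory Submission
  imports Defs
begin

definition net1 :: "(real \<Rightarrow> real) \<Rightarrow> (real \<Rightarrow> real) \<Rightarrow> bool" where
  "net1 \<sigma> g \<longleftrightarrow> (\<exists>L::(real\<times>real\<times>real) list. g = (\<lambda>t. sum_list (map (\<lambda>(a,al,be). a * \<sigma> (al*t+be)) L)))"

definition good :: "(real \<Rightarrow> real) \<Rightarrow> (real \<Rightarrow> real) \<Rightarrow> bool" where
  "good \<sigma> g \<longleftrightarrow> (\<forall>R \<epsilon>. \<epsilon> > 0 \<longrightarrow> (\<exists>h. net1 \<sigma> h \<and> (\<forall>t. \<bar>t\<bar> \<le> R \<longrightarrow> \<bar>g t - h t\<bar> < \<epsilon>)))"

lemma net1_add: "net1 \<sigma> g \<Longrightarrow> net1 \<sigma> h \<Longrightarrow> net1 \<sigma> (\<lambda>t. g t + h t)"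
  unfolding net1_def
proof (elim exE)
  fix L1 L2 assume "g = (\<lambda>t. sum_list (map (\<lambda>(a,al,be). a * \<sigma> (al*t+be)) L1))"
    "h = (\<lambda>t. sum_list (map (\<lambda>(a,al,be). a * \<sigma> (al*t+be)) L2))"
  then show "\<exists>L::(real\<times>real\<times>real) list. (\<lambda>t. g t + h t) = (\<lambda>t. sum_list (map (\<lambda>(a,al,be). a * \<sigma> (al*t+be)) L))"
    by (intro exI[of _ "L1 @ L2"]) auto
qed

lemma net1_scale: "net1 \<sigma> g \<Longrightarrow> net1 \<sigma> (\<lambda>t. c * g t)"
  unfolding net1_def
proof (elim exE)
  fix L assume "g = (\<lambda>t. sum_list (map (\<lambda>(a,al,be). a * \<sigma> (al*t+be)) L))"
  then show "\<exists>L::(real\<times>real\<times>real) list. (\<lambda>t. c * g t) = (\<lambda>t. sum_list (map (\<lambda>(a,al,be). a * \<sigma> (al*t+be)) L))"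
    by (intro exI[of _ "map (\<lambda>(a,al,be). (c*a,al,be)) L"])
      (auto simp: sum_list_const_mult[symmetric] o_def case_prod_beta mult.assoc)
qed

lemma net1_affine: "net1 \<sigma> g \<Longrightarrow> net1 \<sigma> (\<lambda>t. g (p*t+q))"
  unfolding net1_def
proof (elim exE)
  fix L assume "g = (\<lambda>t. sum_list (map (\<lambda>(a,al,be). a * \<sigma> (al*t+be)) L))"
  then show "\<exists>L::(real\<times>real\<times>real) list. (\<lambda>t. g (p*t+q)) = (\<lambda>t. sum_list (map (\<lambda>(a,al,be). a * \<sigma> (al*t+be)) L))"
  proof (intro exI[of _ "map (\<lambda>(a,al,be). (a,al*p,al*q+be)) L"] ext)
    fix t
    have "sum_list (map (\<lambda>(a,al,be). a * \<sigma> (al*(p*t+q)+be)) L) = sum_list (map (\<lambda>(a,al,be). a * \<sigma> (al*t+be)) (map (\<lambda>(a,al,be). (a,al*p,al*q+be)) L))"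
      by (induction L) (auto simp: algebra_simps)
    then show "g (p*t+q) = sum_list (map (\<lambda>(a,al,be). a * \<sigma> (al*t+be)) (map (\<lambda>(a,al,be). (a,al*p,al*q+be)) L))"
      using \<open>g = _\<close> by simp
  qed
qed

lemma net1_sigma: "net1 \<sigma> \<sigma>"
  unfolding net1_def by (intro exI[of _ "[(1,1,0)]"]) auto

lemma goodI: "(\<And>R \<epsilon>. \<epsilon> > 0 \<Longrightarrow> \<exists>h. net1 \<sigma> h \<and> (\<forall>t. \<bar>t\<bar> \<le> R \<longrightarrow> \<bar>g t - h t\<bar> < \<epsilon>)) \<Longrightarrow> good \<sigma> g"
  unfolding good_def by blast

lemma good_net: "net1 \<sigma> g \<Longrightarrow> good \<sigma> g"
  unfolding good_def by (metis abs_zero diff_self)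

lemma good_limit:
  assumes "\<And>R \<epsilon>. \<epsilon> > 0 \<Longrightarrow> \<exists>h. good \<sigma> h \<and> (\<forall>t. \<bar>t\<bar> \<le> R \<longrightarrow> \<bar>g t - h t\<bar> < \<epsilon>)"
  shows "good \<sigma> g"
proof (rule goodI)
  fix R \<epsilon> :: real assume e: "\<epsilon> > 0"
  then obtain h where h: "good \<sigma> h" "\<forall>t. \<bar>t\<bar> \<le> R \<longrightarrow> \<bar>g t - h t\<bar> < \<epsilon>/2"
    using assms[of "\<epsilon>/2"] by auto
  then obtain h' where h'1: "net1 \<sigma> h'" and h'2: "\<forall>t. \<bar>t\<bar> \<le> R \<longrightarrow> \<bar>h t - h' t\<bar> < \<epsilon>/2"
    using e unfolding good_def by (meson half_gt_zero)
  show "\<exists>h. net1 \<sigma> h \<and> (\<forall>t. \<bar>t\<bar> \<le> R \<longrightarrow> \<bar>g t - h t\<bar> < \<epsilon>)"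
  proof (intro exI[of _ h'] conjI allI impI)
    fix t :: real assume t: "\<bar>t\<bar> \<le> R"
    have "\<bar>g t - h' t\<bar> \<le> \<bar>g t - h t\<bar> + \<bar>h t - h' t\<bar>" by linarith
    then show "\<bar>g t - h' t\<bar> < \<epsilon>" using h t h'2 by force
  qed (fact h'1)
qed

lemma good_add: assumes "good \<sigma> g" "good \<sigma> h" shows "good \<sigma> (\<lambda>t. g t + h t)"
proof (rule goodI)
  fix R \<epsilon> :: real assume e: "\<epsilon> > 0"
  obtain g' where g': "net1 \<sigma> g'" "\<forall>t. \<bar>t\<bar> \<le> R \<longrightarrow> \<bar>g t - g' t\<bar> < \<epsilon>/2"
    using assms(1) e unfolding good_def by (meson half_gt_zero)
  obtain h' where h': "net1 \<sigma> h'" "\<forall>t. \<bar>t\<bar> \<le> R \<longrightarrow> \<bar>h t - h' t\<bar> < \<epsilon>/2"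
    using assms(2) e unfolding good_def by (meson half_gt_zero)
  show "\<exists>f. net1 \<sigma> f \<and> (\<forall>t. \<bar>t\<bar> \<le> R \<longrightarrow> \<bar>g t + h t - f t\<bar> < \<epsilon>)"
  proof (intro exI[of _ "\<lambda>t. g' t + h' t"] conjI allI impI)
    fix t :: real assume t: "\<bar>t\<bar> \<le> R"
    have "\<bar>g t + h t - (g' t + h' t)\<bar> \<le> \<bar>g t - g' t\<bar> + \<bar>h t - h' t\<bar>" by linarith
    then show "\<bar>g t + h t - (g' t + h' t)\<bar> < \<epsilon>" using g' h' t by force
  qed (use g' h' net1_add in auto)
qed

lemma good_scale: assumes "good \<sigma> g" shows "good \<sigma> (\<lambda>t. c * g t)"
proof (rule goodI)
  fix R \<epsilon> :: real assume e: "\<epsilon> > 0"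
  have e': "\<epsilon> / (\<bar>c\<bar>+1) > 0" using e by auto
  obtain g' where g': "net1 \<sigma> g'" "\<forall>t. \<bar>t\<bar> \<le> R \<longrightarrow> \<bar>g t - g' t\<bar> < \<epsilon> / (\<bar>c\<bar>+1)"
    using assms(1) e' unfolding good_def by meson
  have "\<bar>c * g t - c * g' t\<bar> < \<epsilon>" if "\<bar>t\<bar> \<le> R" for t
  proof -
    have "\<bar>c * g t - c * g' t\<bar> = \<bar>c\<bar> * \<bar>g t - g' t\<bar>" by (simp add: abs_mult[symmetric] algebra_simps)
    also have "\<dots> \<le> (\<bar>c\<bar>+1) * \<bar>g t - g' t\<bar>" by (simp add: mult_right_mono)
    also have "\<dots> < (\<bar>c\<bar>+1) * (\<epsilon> / (\<bar>c\<bar>+1))"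
      using g'(2) that by (intro mult_strict_left_mono) auto
    also have "\<dots> = \<epsilon>" by simp
    finally show ?thesis .
  qed
  then show "\<exists>f. net1 \<sigma> f \<and> (\<forall>t. \<bar>t\<bar> \<le> R \<longrightarrow> \<bar>c * g t - f t\<bar> < \<epsilon>)"
    using g' by (intro exI[of _ "\<lambda>t. c * g' t"]) (auto intro: net1_scale)
qed

lemma good_diff: "good \<sigma> g \<Longrightarrow> good \<sigma> h \<Longrightarrow> good \<sigma> (\<lambda>t. g t - h t)"
  using good_add[of \<sigma> g "\<lambda>t. (-1) * h t"] good_scale[of \<sigma> h "-1"] by simp

lemma good_affine: assumes "good \<sigma> g" shows "good \<sigma> (\<lambda>t. g (p*t+q))"
proof (rule goodI)
  fix R \<epsilon> :: real assume e: "\<epsilon> > 0"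
  obtain g' where g': "net1 \<sigma> g'" "\<forall>t. \<bar>t\<bar> \<le> \<bar>p\<bar>*\<bar>R\<bar>+\<bar>q\<bar> \<longrightarrow> \<bar>g t - g' t\<bar> < \<epsilon>"
    using assms(1) e unfolding good_def by meson
  have "\<bar>p*t+q\<bar> \<le> \<bar>p\<bar>*\<bar>R\<bar>+\<bar>q\<bar>" if "\<bar>t\<bar> \<le> R" for t
  proof -
    have "\<bar>p*t+q\<bar> \<le> \<bar>p\<bar>*\<bar>t\<bar>+\<bar>q\<bar>" by (metis abs_mult abs_triangle_ineq)
    also have "\<dots> \<le> \<bar>p\<bar>*\<bar>R\<bar>+\<bar>q\<bar>" using that by (intro add_right_mono mult_left_mono) auto
    finally show ?thesis .
  qed
  then show "\<exists>f. net1 \<sigma> f \<and> (\<forall>t. \<bar>t\<bar> \<le> R \<longrightarrow> \<bar>g (p*t+q) - f t\<bar> < \<epsilon>)"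
    using g' by (intro exI[of _ "\<lambda>t. g' (p*t+q)"]) (auto intro: net1_affine)
qed

lemma good_sum: "(\<And>i. i \<in> A \<Longrightarrow> good \<sigma> (f i)) \<Longrightarrow> finite A \<Longrightarrow> good \<sigma> (\<lambda>t. \<Sum>i\<in>A. f i t)"
proof (induction A rule: infinite_finite_induct)
  case (infinite A) then show ?case by simp
next
  case empty then show ?case using good_scale[OF good_net[OF net1_sigma], of \<sigma> 0] by simp
next
  case (insert x F) then show ?case by (simp add: good_add)
qed

lemma good_sigma: "good \<sigma> \<sigma>" by (rule good_net[OF net1_sigma])

lemma mvt_abs:
  fixes f f' :: "real \<Rightarrow> real"
  assumes "\<And>x. DERIV f x :> f' x"
  shows "\<exists>z. \<bar>z - x\<bar> \<le> \<bar>y - x\<bar> \<and> f y - f x = (y - x) * f' z"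
proof (cases x y rule: linorder_cases)
  case less
  then obtain z where "x < z" "z < y" "f y - f x = (y - x) * f' z"
    using MVT2[of x y f f'] assms by blast
  then show ?thesis by (intro exI[of _ z]) auto
next
  case equal then show ?thesis by auto
next
  case greater
  then obtain z where "y < z" "z < x" "f x - f y = (x - y) * f' z"
    using MVT2[of y x f f'] assms by blast
  then show ?thesis by (intro exI[of _ z]) (auto simp: algebra_simps)
qed

lemma ucont_interval:
  fixes g :: "real \<Rightarrow> real"
  assumes "continuous_on UNIV g" "e > 0"
  shows "\<exists>d>0. \<forall>x y. \<bar>x\<bar> \<le> B \<longrightarrow> \<bar>y\<bar> \<le> B \<longrightarrow> \<bar>x - y\<bar> < d \<longrightarrow> \<bar>g x - g y\<bar> < e"
proof -
  have "uniformly_continuous_on {-B..B} g"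
    by (rule compact_uniformly_continuous) (auto intro: continuous_on_subset[OF assms(1)])
  then obtain d where "d > 0" "\<forall>x\<in>{-B..B}. \<forall>x'\<in>{-B..B}. dist x' x < d \<longrightarrow> dist (g x') (g x) < e"
    using assms(2) unfolding uniformly_continuous_on_def by blast
  then show ?thesis
    by (intro exI[of _ d]) (auto simp: dist_real_def abs_le_iff)
qed

lemma good_dif:
  assumes good: "good \<sigma> g" and cont: "continuous_on UNIV g" and der: "\<And>x. DERIV G x :> g x" and h: "h > 0"
  shows "good \<sigma> (\<lambda>t. G (t+h) - G t)"
proof (rule good_limit)
  fix R \<epsilon> :: real assume e: "\<epsilon> > 0"
  define B where "B = \<bar>R\<bar> + h + 1"
  obtain d where d: "d > 0" "\<And>x y. \<bar>x\<bar> \<le> B \<Longrightarrow> \<bar>y\<bar> \<le> B \<Longrightarrow> \<bar>x - y\<bar> < d \<Longrightarrow> \<bar>g x - g y\<bar> < \<epsilon>/(2*h)"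
    using ucont_interval[OF cont, of "\<epsilon>/(2*h)" B] e h by auto
  define N :: nat where "N = nat \<lceil>h/d\<rceil> + 1"
  have N0: "N > 0" unfolding N_def by simp
  have "real N > h/d" unfolding N_def by linarith
  then have hN: "h / N < d" using d(1) N0 by (simp add: field_simps)
  define r where "r = (\<lambda>t. \<Sum>i\<in>{..<N}. (h/N) * g (1*t + real i * h / N))"
  have "good \<sigma> r" unfolding r_def
    by (intro good_sum good_scale good_affine good) auto
  moreover have "\<bar>G (t+h) - G t - r t\<bar> < \<epsilon>" if t: "\<bar>t\<bar> \<le> R" for t
  proof -
    define a where "a = (\<lambda>i::nat. t + real i * h / N)"
    have tel: "G (t+h) - G t = (\<Sum>i<N. G (a (Suc i)) - G (a i))"
      by (subst sum_lessThan_telescope) (use N0 in \<open>simp add: a_def\<close>)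
    have trm: "\<bar>(G (a (Suc i)) - G (a i)) - (h/N) * g (a i)\<bar> \<le> (h/N) * (\<epsilon>/(2*h))" if i: "i < N" for i
    proof -
      have ab: "a i < a (Suc i)" "a (Suc i) - a i = h/N" using h N0 by (auto simp: a_def field_simps)
      obtain z where z: "a i < z" "z < a (Suc i)" "G (a (Suc i)) - G (a i) = (a (Suc i) - a i) * g z"
        using MVT2[OF ab(1), of G g] der by blast
      have iN: "real i + 1 \<le> real N" using i by linarith
      have "h * (real i + 1) \<le> h * real N" using h iN by (intro mult_left_mono) auto
      then have "a i \<ge> t" "a (Suc i) \<le> t + h" using i h N0 by (auto simp: a_def field_simps)
      then have "\<bar>a i\<bar> \<le> B" "\<bar>z\<bar> \<le> B" using z t h unfolding B_def by auto
      moreover have "\<bar>z - a i\<bar> < d" using z ab hN by auto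
      ultimately have "\<bar>g z - g (a i)\<bar> < \<epsilon>/(2*h)" using d(2) by blast
      then have "(h/N) * \<bar>g z - g (a i)\<bar> \<le> (h/N) * (\<epsilon>/(2*h))"
        using h by (intro mult_left_mono) auto
      moreover have "(G (a (Suc i)) - G (a i)) - (h/N) * g (a i) = (h/N) * (g z - g (a i))"
        using z(3) ab(2) by (simp add: algebra_simps)
      ultimately show ?thesis using h by (simp add: abs_mult)
    qed
    have "r t = (\<Sum>i<N. (h/N) * g (a i))" unfolding r_def a_def by simp
    then have "G (t+h) - G t - r t = (\<Sum>i<N. (G (a (Suc i)) - G (a i)) - (h/N) * g (a i))"
      using tel by (simp add: sum_subtractf)
    then have "\<bar>G (t+h) - G t - r t\<bar> \<le> (\<Sum>i<N. \<bar>(G (a (Suc i)) - G (a i)) - (h/N) * g (a i)\<bar>)"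
      by (simp add: sum_abs)
    also have "\<dots> \<le> (\<Sum>i<N. (h/N) * (\<epsilon>/(2*h)))" by (intro sum_mono trm) auto
    also have "\<dots> = \<epsilon>/2" using N0 h by (simp add: field_simps)
    finally show ?thesis using e by linarith
  qed
  ultimately show "\<exists>f. good \<sigma> f \<and> (\<forall>t. \<bar>t\<bar> \<le> R \<longrightarrow> \<bar>G (t+h) - G t - f t\<bar> < \<epsilon>)" by blast
qed

lemma good_wderiv:
  assumes der: "\<And>x. DERIV \<phi>0 x :> \<phi>1 x" and cont: "continuous_on UNIV \<phi>1"
    and gd: "\<And>w. good \<sigma> (\<lambda>t. t^j * \<phi>0 (w*t+b))"
  shows "good \<sigma> (\<lambda>t. t^(Suc j) * \<phi>1 (w*t+b))"
proof (rule good_limit)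
  fix R \<epsilon> :: real assume e: "\<epsilon> > 0"
  define M where "M = \<bar>R\<bar>"
  have M0: "M \<ge> 0" unfolding M_def by simp
  define B where "B = (\<bar>w\<bar>+1)*M + \<bar>b\<bar> + 1"
  define e' where "e' = \<epsilon>/(M^(Suc j)+1)"
  have Mp: "M^(Suc j) \<ge> 0" using M0 by simp
  have e'0: "e' > 0" using e Mp unfolding e'_def by (intro divide_pos_pos) linarith+
  obtain d where d: "d > 0" "\<And>x y. \<bar>x\<bar> \<le> B \<Longrightarrow> \<bar>y\<bar> \<le> B \<Longrightarrow> \<bar>x - y\<bar> < d \<Longrightarrow> \<bar>\<phi>1 x - \<phi>1 y\<bar> < e'"
    using ucont_interval[OF cont e'0, of B] by auto
  define \<eta> where "\<eta> = min 1 (d/(M+1)) / 2"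
  have m1: "min 1 (d/(M+1)) \<le> d/(M+1)" "min 1 (d/(M+1)) \<le> 1" "min 1 (d/(M+1)) > 0"
    using d(1) M0 by auto
  have \<eta>0: "\<eta> > 0" "\<eta> \<le> 1/2" "\<eta> \<le> d/(M+1)/2" unfolding \<eta>_def
    using m1(3) apply simp
    using m1(2) apply simp
    using divide_right_mono[OF m1(1), of 2] by simp
  define Q where "Q = (\<lambda>t. (1/\<eta>) * (t^j * \<phi>0 ((w+\<eta>)*t+b)) - (1/\<eta>) * (t^j * \<phi>0 (w*t+b)))"
  have "good \<sigma> Q" unfolding Q_def by (intro good_diff good_scale gd)
  moreover have "\<bar>t^(Suc j) * \<phi>1 (w*t+b) - Q t\<bar> < \<epsilon>" if t: "\<bar>t\<bar> \<le> R" for t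
  proof -
    define x where "x = w*t+b"
    define y where "y = (w+\<eta>)*t+b"
    have yx: "y - x = \<eta> * t" unfolding x_def y_def by (simp add: algebra_simps)
    obtain z where z: "\<bar>z - x\<bar> \<le> \<bar>y - x\<bar>" "\<phi>0 y - \<phi>0 x = (y - x) * \<phi>1 z"
      using mvt_abs[of \<phi>0 \<phi>1 x y] der by blast
    have tM: "\<bar>t\<bar> \<le> M" using t unfolding M_def by simp
    have "\<bar>w*t\<bar> \<le> \<bar>w\<bar> * M" using tM by (simp add: abs_mult mult_left_mono)
    then have xB: "\<bar>x\<bar> \<le> \<bar>w\<bar> * M + \<bar>b\<bar>" unfolding x_def by linarith
    have "\<bar>y - x\<bar> \<le> \<eta> * M" using yx tM \<eta>0 by (simp add: abs_mult mult_left_mono)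
    then have zx: "\<bar>z - x\<bar> \<le> \<eta> * M" using z(1) by linarith
    have "\<eta> * M \<le> M" using \<eta>0 M0 by (simp add: mult_left_le_one_le)
    have "\<eta> * M \<le> d/(M+1)/2 * M" using \<eta>0 M0 by (intro mult_right_mono) auto
    also have "\<dots> = d/2 * (M/(M+1))" by simp
    also have "\<dots> \<le> d/2 * 1" using d(1) M0 by (intro mult_left_mono) auto
    also have "\<dots> < d" using d(1) by simp
    finally have zxd: "\<bar>z - x\<bar> < d" using zx by linarith
    have xB': "\<bar>x\<bar> \<le> B" "\<bar>z\<bar> \<le> B" using xB zx \<open>\<eta> * M \<le> M\<close> M0 unfolding B_def by (auto simp: algebra_simps)
    have close: "\<bar>\<phi>1 z - \<phi>1 x\<bar> < e'" using d(2)[OF xB'(2) xB'(1) zxd] .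
    have "Q t = (t^j * \<phi>0 y - t^j * \<phi>0 x) / \<eta>" unfolding Q_def x_def y_def by (simp add: diff_divide_distrib)
    also have "\<dots> = t^j * (\<phi>0 y - \<phi>0 x) / \<eta>" by (simp add: right_diff_distrib)
    also have "\<dots> = t^j * t * \<phi>1 z * (\<eta> / \<eta>)" unfolding z(2) yx by simp
    also have "\<dots> = t^(Suc j) * \<phi>1 z" using \<eta>0 by (simp add: mult.commute)
    finally have "t^(Suc j) * \<phi>1 (w*t+b) - Q t = t^(Suc j) * (\<phi>1 x - \<phi>1 z)" unfolding x_def by (simp add: algebra_simps)
    then have "\<bar>t^(Suc j) * \<phi>1 (w*t+b) - Q t\<bar> = \<bar>t\<bar>^(Suc j) * \<bar>\<phi>1 z - \<phi>1 x\<bar>" by (simp add: abs_mult power_abs abs_minus_commute)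
    also have "\<dots> \<le> M^(Suc j) * e'"
      using close tM by (intro mult_mono power_mono) auto
    also have "\<dots> < \<epsilon>"
    proof -
      have "M^(Suc j) * e' = \<epsilon> * (M^(Suc j) / (M^(Suc j)+1))" unfolding e'_def by simp
      also have "\<dots> < \<epsilon> * 1" using e Mp by (intro mult_strict_left_mono) auto
      finally show ?thesis by simp
    qed
    finally show ?thesis .
  qed
  ultimately show "\<exists>h. good \<sigma> h \<and> (\<forall>t. \<bar>t\<bar> \<le> R \<longrightarrow> \<bar>t^(Suc j) * \<phi>1 (w*t+b) - h t\<bar> < \<epsilon>)" by blast
qed

definition dif :: "real \<Rightarrow> (real\<Rightarrow>real) \<Rightarrow> real \<Rightarrow> real" where
  "dif h g = (\<lambda>t. g (t+h) - g t)"

lemma dif_apply: "dif h F t = F (t+h) - F t" by (simp add: dif_def)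

lemma dif_pow_Suc: "(dif h ^^ Suc j) g = (\<lambda>t. (dif h ^^ j) g (t+h) - (dif h ^^ j) g t)"
  by (rule ext) (simp add: dif_apply)

lemma dif_pow_deriv:
  assumes "\<And>x. DERIV g x :> g' x"
  shows "DERIV ((dif h ^^ j) g) x :> (dif h ^^ j) g' x"
proof (induction j arbitrary: x)
  case 0 then show ?case using assms by simp
next
  case (Suc j)
  have "DERIV (\<lambda>t. (dif h ^^ j) g (t+h)) x :> (dif h ^^ j) g' (x+h)"
    using Suc DERIV_shift by blast
  then show ?case unfolding dif_pow_Suc using Suc by (intro DERIV_diff)
qed

lemma dif_pow_cont:
  assumes "continuous_on UNIV g"
  shows "continuous_on UNIV ((dif h ^^ j) g)"
proof (induction j)
  case 0 then show ?case using assms by simp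
next
  case (Suc j)
  have "continuous_on UNIV (\<lambda>t. (dif h ^^ j) g (t+h))"
    by (rule continuous_on_compose2[OF Suc continuous_on_add[OF continuous_on_id continuous_on_const]]) simp
  then show ?case unfolding dif_pow_Suc using Suc by (intro continuous_on_diff)
qed

lemma antideriv_exists:
  fixes g :: "real \<Rightarrow> real"
  assumes "continuous_on UNIV g"
  shows "\<exists>G. \<forall>x. DERIV G x :> g x"
proof (intro exI[of _ "\<lambda>u. LBINT y=ereal 0..ereal u. g y"] allI)
  fix x :: real
  define a where "a = -\<bar>x\<bar>-1"
  define b where "b = \<bar>x\<bar>+1"
  have h: "a \<le> 0" "0 \<le> b" "a \<le> x" "x \<le> b" unfolding a_def b_def by auto
  have c: "continuous_on {a..b} g" using continuous_on_subset[OF assms] by blast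
  have FTC: "((\<lambda>u. LBINT y=ereal 0..ereal u. g y) has_vector_derivative g x) (at x within {a..b})"
    by (rule interval_integral_FTC2[OF h(1,2) c h(3,4)])
  have "x \<in> interior {a..b}" unfolding a_def b_def interior_atLeastAtMost_real by auto
  then have "at x within {a..b} = at x" by (rule at_within_interior)
  then have "((\<lambda>u. LBINT y=ereal 0..ereal u. g y) has_vector_derivative g x) (at x)"
    using FTC by (simp only:)
  then show "DERIV (\<lambda>u. LBINT y=ereal 0..ereal u. g y) x :> g x"
    by (simp only: has_real_derivative_iff_has_vector_derivative)
qed

definition antider :: "(real \<Rightarrow> real) \<Rightarrow> real \<Rightarrow> real" where
  "antider g = (SOME G. \<forall>x. DERIV G x :> g x)"

primrec Gs :: "(real \<Rightarrow> real) \<Rightarrow> nat \<Rightarrow> real \<Rightarrow> real" where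
  "Gs s 0 = s" | "Gs s (Suc i) = antider (Gs s i)"

lemma Gs_props:
  assumes "continuous_on UNIV s"
  shows "continuous_on UNIV (Gs s i) \<and> (\<forall>x. DERIV (Gs s (Suc i)) x :> Gs s i x)"
proof (induction i)
  case 0
  have "\<forall>x. DERIV (antider s) x :> s x"
    unfolding antider_def by (rule someI_ex[OF antideriv_exists[OF assms]])
  then show ?case using assms by simp
next
  case (Suc i)
  then have c: "continuous_on UNIV (Gs s (Suc i))"
    by (meson DERIV_isCont continuous_at_imp_continuous_on)
  have "\<forall>x. DERIV (antider (Gs s (Suc i))) x :> Gs s (Suc i) x"
    unfolding antider_def by (rule someI_ex[OF antideriv_exists[OF c]])
  then show ?case using c by simp
qed

lemma good_dif_chain:
  assumes cont: "continuous_on UNIV s" and h: "h > 0"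
  shows "good s ((dif h ^^ j) (Gs s j))"
proof (induction j)
  case 0 then show ?case by (simp add: good_sigma)
next
  case (Suc j)
  have d: "\<And>x. DERIV ((dif h ^^ j) (Gs s (Suc j))) x :> (dif h ^^ j) (Gs s j) x"
    by (rule dif_pow_deriv) (use Gs_props[OF cont, of j] in blast)
  have c: "continuous_on UNIV ((dif h ^^ j) (Gs s j))"
    by (rule dif_pow_cont) (use Gs_props[OF cont, of j] in blast)
  have "good s (\<lambda>t. (dif h ^^ j) (Gs s (Suc j)) (t+h) - (dif h ^^ j) (Gs s (Suc j)) t)"
    by (rule good_dif[OF Suc c d h])
  then show ?case by (simp only: dif_pow_Suc)
qed

lemma monomial_good:
  assumes cont: "continuous_on UNIV s" and h: "h > 0" and nz: "(dif h ^^ k) s b \<noteq> 0"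
  shows "good s (\<lambda>t. t^k)"
proof -
  define D where "D = (\<lambda>i. (dif h ^^ k) (Gs s (k - i)))"
  have der: "DERIV (D j) x :> D (Suc j) x" if "j < k" for j x
  proof -
    have e: "k - j = Suc (k - Suc j)" using that by simp
    show ?thesis unfolding D_def e
      by (rule dif_pow_deriv) (use Gs_props[OF cont] in blast)
  qed
  have cD: "continuous_on UNIV (D j)" for j
    unfolding D_def by (rule dif_pow_cont) (use Gs_props[OF cont] in blast)
  have "\<forall>w b. good s (\<lambda>t. t^j * D j (w*t+b))" if "j \<le> k" for j
    using that
  proof (induction j)
    case 0
    have "good s (D 0)" unfolding D_def using good_dif_chain[OF cont h, of k] by simp
    then show ?case by (simp add: good_affine)
  next
    case (Suc j)
    then show ?case
      using good_wderiv[of "D j" "D (Suc j)" s j] der cD by simp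
  qed
  then have "good s (\<lambda>t. t^k * D k (0*t+b))" by blast
  then have "good s (\<lambda>t. (1 / D k b) * (t^k * D k (0*t+b)))" by (rule good_scale)
  moreover have "D k = (dif h ^^ k) s" unfolding D_def by simp
  ultimately show ?thesis using nz by simp
qed

definition lagr :: "nat \<Rightarrow> nat \<Rightarrow> real poly" where
  "lagr k i = smult (1 / (\<Prod>j\<in>{..k}-{i}. (real i - real j))) (\<Prod>j\<in>{..k}-{i}. [:- real j, 1:])"

lemma lagr_degree: "i \<le> k \<Longrightarrow> degree (lagr k i) \<le> k"
proof -
  assume ik: "i \<le> k"
  have "degree (\<Prod>j\<in>{..k}-{i}. [:- real j, 1:]) \<le> (\<Sum>j\<in>{..k}-{i}. degree [:- real j, 1:])"
    using degree_prod_sum_le[of "{..k}-{i}" "\<lambda>j. [:- real j, 1:]"] by (simp add: o_def)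
  also have "\<dots> = card ({..k}-{i})" by simp
  also have "\<dots> \<le> k" using ik by (auto simp: card_Diff_singleton)
  finally show ?thesis unfolding lagr_def using degree_smult_le order_trans by blast
qed

lemma lagr_poly: "l \<le> k \<Longrightarrow> poly (lagr k i) (real l) = (if l = i then 1 else 0)"
proof -
  assume l: "l \<le> k"
  have pp: "poly (\<Prod>j\<in>{..k}-{i}. [:- real j, 1:]) x = (\<Prod>j\<in>{..k}-{i}. x - real j)" for x
    by (simp add: poly_prod)
  show ?thesis
  proof (cases "l = i")
    case True
    have "(\<Prod>j\<in>{..k}-{i}. real i - real j) \<noteq> 0" by (simp add: prod_zero_iff)
    then show ?thesis using True by (simp add: lagr_def pp)
  next
    case False
    then have "l \<in> {..k}-{i}" using l by auto
    then have "(\<Prod>j\<in>{..k}-{i}. real l - real j) = 0" by (intro prod_zero) auto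
    then show ?thesis using False by (simp add: lagr_def pp)
  qed
qed

lemma interp:
  fixes q :: "real poly"
  assumes "degree q \<le> k"
  shows "q = (\<Sum>i\<le>k. smult (poly q (real i)) (lagr k i))"
proof (rule poly_eqI_degree[where A = "real ` {..k}"])
  fix x assume "x \<in> real ` {..k}"
  then obtain l where l: "l \<le> k" "x = real l" by auto
  have "poly (\<Sum>i\<le>k. smult (poly q (real i)) (lagr k i)) x = (\<Sum>i\<le>k. poly q (real i) * (if l = i then 1 else 0))"
    using l by (simp add: poly_sum lagr_poly)
  also have "\<dots> = poly q x" using l by (simp add: if_distrib cong: if_cong)
  finally show "poly q x = poly (\<Sum>i\<le>k. smult (poly q (real i)) (lagr k i)) x" by simp
next
  have c: "card (real ` {..k}) = Suc k" by (simp add: card_image)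
  show "degree q < card (real ` {..k})" using assms c by simp
  have "degree (\<Sum>i\<le>k. smult (poly q (real i)) (lagr k i)) \<le> k"
    by (intro degree_sum_le) (auto intro!: order_trans[OF degree_smult_le] lagr_degree)
  then show "degree (\<Sum>i\<le>k. smult (poly q (real i)) (lagr k i)) < card (real ` {..k})" using c by simp
qed

lemma poly_limit:
  fixes q :: "nat \<Rightarrow> real poly"
  assumes deg: "\<And>n. degree (q n) \<le> k" and lim: "\<And>t. (\<lambda>n. poly (q n) t) \<longlonglongrightarrow> f t"
  shows "is_polynomial_fun f"
proof -
  have "f t = poly (\<Sum>i\<le>k. smult (f (real i)) (lagr k i)) t" for t
  proof -
    have eq: "poly (q n) t = (\<Sum>i\<le>k. poly (q n) (real i) * poly (lagr k i) t)" for n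
      by (subst interp[OF deg[of n]]) (simp add: poly_sum)
    have "(\<lambda>n. \<Sum>i\<le>k. poly (q n) (real i) * poly (lagr k i) t) \<longlonglongrightarrow> (\<Sum>i\<le>k. f (real i) * poly (lagr k i) t)"
      by (intro tendsto_intros lim)
    then have "(\<lambda>n. poly (q n) t) \<longlonglongrightarrow> (\<Sum>i\<le>k. f (real i) * poly (lagr k i) t)"
      unfolding eq .
    then have "f t = (\<Sum>i\<le>k. f (real i) * poly (lagr k i) t)" using lim LIMSEQ_unique by blast
    then show ?thesis by (simp add: poly_sum)
  qed
  then show ?thesis unfolding is_polynomial_fun_def by blast
qed

lemma poly_antideriv:
  fixes p :: "real poly"
  shows "\<exists>P. degree P \<le> Suc (degree p) \<and> pderiv P = p"
proof (intro exI conjI)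
  let ?P = "\<Sum>i\<le>degree p. monom (coeff p i / real (Suc i)) (Suc i)"
  show "degree ?P \<le> Suc (degree p)"
    by (intro degree_sum_le) (auto intro: order_trans[OF degree_monom_le])
  have "pderiv ?P = (\<Sum>i\<le>degree p. pderiv (monom (coeff p i / real (Suc i)) (Suc i)))"
    using higher_pderiv_sum[of 1] by simp
  also have "\<dots> = (\<Sum>i\<le>degree p. monom (coeff p i) i)"
    by (simp add: pderiv_monom)
  also have "\<dots> = p" by (rule poly_as_sum_of_monoms)
  finally show "pderiv ?P = p" .
qed

lemma deriv_poly_imp_poly:
  fixes f :: "real \<Rightarrow> real" and p :: "real poly"
  assumes "\<And>x. DERIV f x :> poly p x"
  shows "\<exists>P. degree P \<le> Suc (degree p) \<and> f = poly P"
proof -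
  obtain P where P: "degree P \<le> Suc (degree p)" "pderiv P = p" using poly_antideriv by blast
  have "\<forall>x. DERIV (\<lambda>x. f x - poly P x) x :> 0"
    using assms P(2) by (auto intro!: derivative_eq_intros)
  then have c: "f x - poly P x = f 0 - poly P 0" for x by (rule DERIV_isconst_all)
  show ?thesis
  proof (intro exI conjI)
    show "f = poly (P + [:f 0 - poly P 0:])" using c by (auto simp: algebra_simps)
    show "degree (P + [:f 0 - poly P 0:]) \<le> Suc (degree p)"
      using P(1) degree_add_le[of P "Suc (degree p)" "[:f 0 - poly P 0:]"] by simp
  qed
qed

lemma mv_chain:
  assumes cont: "continuous_on UNIV s" and h: "h > 0"
  shows "\<exists>\<xi>. t \<le> \<xi> \<and> \<xi> \<le> t + real j * h \<and> (dif h ^^ j) (Gs s (i+j)) t = h^j * Gs s i \<xi>"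
proof (induction j arbitrary: t)
  case 0 then show ?case by auto
next
  case (Suc j)
  let ?H = "(dif h ^^ j) (Gs s (Suc (i+j)))"
  have d: "\<And>x. DERIV ?H x :> (dif h ^^ j) (Gs s (i+j)) x"
    by (rule dif_pow_deriv) (use Gs_props[OF cont] in blast)
  obtain z where z: "t < z" "z < t + h" "?H (t+h) - ?H t = (t + h - t) * (dif h ^^ j) (Gs s (i+j)) z"
    using MVT2[of t "t+h" ?H] d h by auto
  obtain \<xi> where \<xi>: "z \<le> \<xi>" "\<xi> \<le> z + real j * h" "(dif h ^^ j) (Gs s (i+j)) z = h^j * Gs s i \<xi>"
    using Suc by blast
  have "(dif h ^^ Suc j) (Gs s (i + Suc j)) t = ?H (t+h) - ?H t" by (simp only: dif_pow_Suc add_Suc_right)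
  also have "\<dots> = h^(Suc j) * Gs s i \<xi>" using z(3) \<xi>(3) by simp
  finally show ?case using z \<xi> by (intro exI[of _ \<xi>]) (auto simp: algebra_simps)
qed

lemma nonpoly_dif:
  assumes cont: "continuous_on UNIV s" and np: "\<not> is_polynomial_fun s"
  shows "\<exists>h>0. \<exists>b. (dif h ^^ k) s b \<noteq> 0"
proof (rule ccontr)
  assume "\<not> (\<exists>h>0. \<exists>b. (dif h ^^ k) s b \<noteq> 0)"
  then have z: "\<And>h b. h > 0 \<Longrightarrow> (dif h ^^ k) s b = 0" by blast
  have polyE: "\<exists>p. degree p \<le> k \<and> (dif h ^^ k) (Gs s k) = poly p" if h: "h > 0" for h
  proof -
    have "\<exists>p. degree p \<le> i \<and> (dif h ^^ k) (Gs s i) = poly p" if "i \<le> k" for i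
      using that
    proof (induction i)
      case 0
      have "(dif h ^^ k) (Gs s 0) = poly 0" using z[OF h] by auto
      then show ?case by (intro exI[of _ 0]) auto
    next
      case (Suc i)
      then obtain p where p: "degree p \<le> i" "(dif h ^^ k) (Gs s i) = poly p" by auto
      have "\<And>x. DERIV ((dif h ^^ k) (Gs s (Suc i))) x :> poly p x"
        using dif_pow_deriv[where g="Gs s (Suc i)" and g'="Gs s i" and h=h and j=k] Gs_props[OF cont, of i] p(2) by metis
      then obtain P where "degree P \<le> Suc (degree p)" "(dif h ^^ k) (Gs s (Suc i)) = poly P"
        using deriv_poly_imp_poly by blast
      then show ?case using p(1) by (intro exI[of _ P]) auto
    qed
    then show ?thesis by simp
  qed
  define hs where "hs = (\<lambda>n::nat. inverse (real (Suc n)))"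
  have hs0: "hs n > 0" for n unfolding hs_def by simp
  obtain P where P: "\<And>n. degree (P n) \<le> k \<and> (dif (hs n) ^^ k) (Gs s k) = poly (P n)"
    using polyE[OF hs0] by metis
  define q where "q = (\<lambda>n. smult (1 / hs n ^ k) (P n))"
  have degq: "degree (q n) \<le> k" for n
    unfolding q_def using P[of n] degree_smult_le order_trans by blast
  have "(\<lambda>n. poly (q n) t) \<longlonglongrightarrow> s t" for t
  proof -
    have "\<forall>n. \<exists>\<xi>. t \<le> \<xi> \<and> \<xi> \<le> t + real k * hs n \<and> (dif (hs n) ^^ k) (Gs s (0+k)) t = hs n ^ k * Gs s 0 \<xi>"
      using mv_chain[OF cont hs0] by blast
    then obtain \<xi> where \<xi>: "\<And>n. t \<le> \<xi> n" "\<And>n. \<xi> n \<le> t + real k * hs n"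
      "\<And>n. (dif (hs n) ^^ k) (Gs s k) t = hs n ^ k * s (\<xi> n)"
      by (metis Gs.simps(1) add_0)
    have pq: "poly (q n) t = s (\<xi> n)" for n
    proof -
      have "poly (q n) t = (dif (hs n) ^^ k) (Gs s k) t / hs n ^ k"
        unfolding q_def using P[of n] by simp
      also have "\<dots> = s (\<xi> n)" using \<xi>(3)[of n] hs0[of n] by simp
      finally show ?thesis .
    qed
    have "(\<lambda>n. t + real k * hs n) \<longlonglongrightarrow> t + real k * 0"
      unfolding hs_def by (intro tendsto_intros LIMSEQ_inverse_real_of_nat)
    then have "\<xi> \<longlonglongrightarrow> t"
      by (intro tendsto_sandwich[of "\<lambda>n. t" \<xi> sequentially "\<lambda>n. t + real k * hs n"])
        (auto simp: \<xi>(1,2))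
    moreover have "isCont s t" using cont by (simp add: continuous_on_eq_continuous_at)
    ultimately have "(\<lambda>n. s (\<xi> n)) \<longlonglongrightarrow> s t" by (rule isCont_tendsto_compose[rotated])
    then show ?thesis by (simp add: pq)
  qed
  then have "is_polynomial_fun s" by (rule poly_limit[OF degq])
  then show False using np by simp
qed

lemma good_monomial:
  assumes cont: "continuous_on UNIV s" and np: "\<not> is_polynomial_fun s"
  shows "good s (\<lambda>t. t^k)"
  using nonpoly_dif[OF cont np, of k] monomial_good[OF cont] by blast

lemma good_exp:
  assumes cont: "continuous_on UNIV s" and np: "\<not> is_polynomial_fun s"
  shows "good s exp"
proof (rule good_limit)
  fix R \<epsilon> :: real assume e: "\<epsilon> > 0"
  obtain g where g: "real_polynomial_function g" "\<And>x. x \<in> {-R..R} \<Longrightarrow> \<bar>exp x - g x\<bar> < \<epsilon>"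
    using Stone_Weierstrass_real_polynomial_function[of "{-R..R}" exp \<epsilon>] e continuous_on_exp[of "{-R..R}" "\<lambda>x. x"] continuous_on_id
    by blast
  obtain a n where an: "g = (\<lambda>x. \<Sum>i\<le>n. a i * x^i)" using g(1) real_polynomial_function_iff_sum by auto
  have "good s g" unfolding an by (intro good_sum good_scale good_monomial[OF cont np]) auto
  then show "\<exists>h. good s h \<and> (\<forall>t. \<bar>t\<bar> \<le> R \<longrightarrow> \<bar>exp t - h t\<bar> < \<epsilon>)"
    using g(2) by (intro exI[of _ g]) (auto simp: abs_le_iff)
qed

definition netn :: "(real \<Rightarrow> real) \<Rightarrow> (real \<times> (real^'n) \<times> real) list \<Rightarrow> real^'n \<Rightarrow> real" where
  "netn \<sigma> L = (\<lambda>x. sum_list (map (\<lambda>(a,w,b). a * \<sigma> (inner x w + b)) L))"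

lemma netn_append: "netn \<sigma> (L1 @ L2) x = netn \<sigma> L1 x + netn \<sigma> L2 x"
  by (simp add: netn_def)

lemma exp_ridge_approx:
  fixes K :: "(real^'n) set"
  assumes ge: "good \<sigma> exp" and K: "compact K" and e: "\<epsilon> > 0"
  shows "\<exists>L. \<forall>x\<in>K. \<bar>c * exp (inner w x) - netn \<sigma> L x\<bar> < \<epsilon>"
proof -
  obtain B where B: "\<forall>x\<in>K. norm x \<le> B" using compact_imp_bounded[OF K] bounded_iff by blast
  have "good \<sigma> (\<lambda>t. c * exp t)" by (rule good_scale[OF ge])
  then obtain h where h: "net1 \<sigma> h" "\<forall>t. \<bar>t\<bar> \<le> norm w * B \<longrightarrow> \<bar>c * exp t - h t\<bar> < \<epsilon>"
    using e unfolding good_def by blast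
  obtain L1 where L1: "h = (\<lambda>t. sum_list (map (\<lambda>(a,al,be). a * \<sigma> (al*t+be)) L1))"
    using h(1) unfolding net1_def by blast
  define L where "L = map (\<lambda>(a,al,be). (a, al *\<^sub>R w, be)) L1"
  have hL: "netn \<sigma> L x = h (inner w x)" for x
  proof -
    have "sum_list (map (\<lambda>(a,al,be). a * \<sigma> (al*inner w x+be)) L1) = netn \<sigma> (map (\<lambda>(a,al,be). (a, al *\<^sub>R w, be)) L1) x"
      by (induction L1) (auto simp: netn_def inner_commute)
    then show ?thesis unfolding L_def L1 by simp
  qed
  show ?thesis
  proof (intro exI[of _ L] ballI)
    fix x assume "x \<in> K"
    then have "\<bar>inner w x\<bar> \<le> norm w * B"
      using B Cauchy_Schwarz_ineq2[of w x] by (meson mult_left_mono norm_ge_zero order_trans)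
    then show "\<bar>c * exp (inner w x) - netn \<sigma> L x\<bar> < \<epsilon>" using h(2) hL by simp
  qed
qed

inductive expsum :: "(real^'n \<Rightarrow> real) \<Rightarrow> bool" where
  base: "expsum (\<lambda>x. c * exp (inner w x))"
| add: "expsum f \<Longrightarrow> expsum g \<Longrightarrow> expsum (\<lambda>x. f x + g x)"

lemma expsum_mult_base: "expsum g \<Longrightarrow> expsum (\<lambda>x. (c * exp (inner w x)) * g x)"
proof (induction rule: expsum.induct)
  case (base c' w')
  have "(\<lambda>x. (c * exp (inner w x)) * (c' * exp (inner w' x))) = (\<lambda>x. (c*c') * exp (inner (w+w') x))"
    by (auto simp: inner_add_left exp_add)
  then show ?case using expsum.base by metis
next
  case (add f g)
  then show ?case using expsum.add[OF add.IH] by (simp add: distrib_left)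
qed

lemma expsum_mult: "expsum f \<Longrightarrow> expsum g \<Longrightarrow> expsum (\<lambda>x. f x * g x)"
proof (induction rule: expsum.induct)
  case (base c w) then show ?case by (rule expsum_mult_base)
next
  case (add f1 f2)
  then show ?case using expsum.add[of "\<lambda>x. f1 x * g x" "\<lambda>x. f2 x * g x"] by (simp add: distrib_right)
qed

lemma expsum_cont: "expsum f \<Longrightarrow> continuous_on S f"
  by (induction rule: expsum.induct) (auto intro!: continuous_intros)

lemma expsum_approx:
  fixes K :: "(real^'n) set"
  assumes ge: "good \<sigma> exp" and K: "compact K"
  shows "expsum g \<Longrightarrow> \<epsilon> > 0 \<Longrightarrow> \<exists>L. \<forall>x\<in>K. \<bar>g x - netn \<sigma> L x\<bar> < \<epsilon>"
proof (induction arbitrary: \<epsilon> rule: expsum.induct)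
  case (base c w) then show ?case using exp_ridge_approx[OF ge K] by blast
next
  case (add f g)
  obtain L1 where L1: "\<forall>x\<in>K. \<bar>f x - netn \<sigma> L1 x\<bar> < \<epsilon>/2" using add by (meson half_gt_zero)
  obtain L2 where L2: "\<forall>x\<in>K. \<bar>g x - netn \<sigma> L2 x\<bar> < \<epsilon>/2" using add by (meson half_gt_zero)
  show ?case
  proof (intro exI[of _ "L1 @ L2"] ballI)
    fix x assume x: "x \<in> K"
    have "\<bar>f x + g x - netn \<sigma> (L1 @ L2) x\<bar> \<le> \<bar>f x - netn \<sigma> L1 x\<bar> + \<bar>g x - netn \<sigma> L2 x\<bar>"
      by (simp add: netn_append)
    then show "\<bar>f x + g x - netn \<sigma> (L1 @ L2) x\<bar> < \<epsilon>" using L1 L2 x by force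
  qed
qed

lemma net_approx:
  fixes K :: "(real^'n) set" and f :: "real^'n \<Rightarrow> real"
  assumes ge: "good \<sigma> exp" and K: "compact K" and f: "continuous_on UNIV f" and e: "\<epsilon> > 0"
  shows "\<exists>L. \<forall>x\<in>K. \<bar>f x - netn \<sigma> L x\<bar> < \<epsilon>"
proof -
  have "\<exists>g. expsum g \<and> (\<forall>x\<in>K. \<bar>f x - g x\<bar> < \<epsilon>/2)"
  proof (rule Stone_Weierstrass_HOL[OF K])
    fix c :: real show "expsum (\<lambda>x. c)" using expsum.base[of c 0] by simp
  next
    fix g :: "real^'n \<Rightarrow> real" assume "expsum g" then show "continuous_on K g" by (rule expsum_cont)
  next
    fix g h :: "real^'n \<Rightarrow> real" assume "expsum g \<and> expsum h"
    then show "expsum (\<lambda>x. g x + h x)" "expsum (\<lambda>x. g x * h x)" by (auto intro: expsum.add expsum_mult)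
  next
    fix x y :: "real^'n" assume xy: "x \<in> K \<and> y \<in> K \<and> x \<noteq> y"
    have "inner (x - y) x - inner (x - y) y = inner (x - y) (x - y)" by (simp add: inner_diff_right)
    moreover have "inner (x - y) (x - y) > 0" using xy by simp
    ultimately have "exp (inner (x - y) x) \<noteq> exp (inner (x - y) y)" by auto
    then show "\<exists>g. expsum g \<and> g x \<noteq> g y"
      using expsum.base[of 1 "x - y"] by (intro exI[of _ "\<lambda>z. 1 * exp (inner (x - y) z)"]) auto
  next
    show "continuous_on K f" using f by (rule continuous_on_subset) auto
    show "0 < \<epsilon>/2" using e by simp
  qed
  then obtain g where g: "expsum g" "\<forall>x\<in>K. \<bar>f x - g x\<bar> < \<epsilon>/2" by blast
  obtain L where L: "\<forall>x\<in>K. \<bar>g x - netn \<sigma> L x\<bar> < \<epsilon>/2" using expsum_approx[OF ge K g(1)] e by (meson half_gt_zero)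
  show ?thesis
  proof (intro exI[of _ L] ballI)
    fix x assume x: "x \<in> K"
    have "\<bar>f x - netn \<sigma> L x\<bar> \<le> \<bar>f x - g x\<bar> + \<bar>g x - netn \<sigma> L x\<bar>" by linarith
    then show "\<bar>f x - netn \<sigma> L x\<bar> < \<epsilon>" using g(2) L x by force
  qed
qed

definition ip :: "nat \<Rightarrow> (nat\<Rightarrow>real) \<Rightarrow> (nat\<Rightarrow>real) \<Rightarrow> real" where
  "ip m u v = (\<Sum>j<m. u j * v j)"

lemma ip_cong: "(\<And>j. j < m \<Longrightarrow> u j = u' j) \<Longrightarrow> ip m u v = ip m u' v"
  unfolding ip_def by (intro sum.cong) auto
lemma ip_sym: "ip m u v = ip m v u"
  unfolding ip_def by (simp add: mult.commute)
lemma ip_add: "ip m (\<lambda>j. u j + u' j) v = ip m u v + ip m u' v"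
  unfolding ip_def by (simp add: distrib_right sum.distrib)
lemma ip_diff: "ip m (\<lambda>j. u j - u' j) v = ip m u v - ip m u' v"
  unfolding ip_def by (simp add: left_diff_distrib sum_subtractf)
lemma ip_scale: "ip m (\<lambda>j. c * u j) v = c * ip m u v"
  unfolding ip_def by (simp add: sum_distrib_left mult.assoc)
lemma ip_sum: "ip m (\<lambda>j. \<Sum>l\<in>S. f l j) v = (\<Sum>l\<in>S. ip m (f l) v)"
  unfolding ip_def by (simp add: sum_distrib_right sum.swap[of _ S])

lemma ip_self_zero: "ip m u u = 0 \<Longrightarrow> j < m \<Longrightarrow> u j = 0"
proof -
  assume "ip m u u = 0" "j < m"
  then have "(\<Sum>j<m. u j * u j) = 0" unfolding ip_def by simp
  then have "\<forall>j\<in>{..<m}. u j * u j = 0" by (subst sum_nonneg_eq_0_iff[symmetric]) auto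
  then show "u j = 0" using \<open>j < m\<close> by auto
qed

lemma ip_self_nonneg: "ip m u u \<ge> 0"
  unfolding ip_def by (intro sum_nonneg) auto

lemma proj_lemma:
  fixes U :: "'a \<Rightarrow> nat \<Rightarrow> real"
  shows "finite I \<Longrightarrow> card I = n \<Longrightarrow> (\<forall>y. \<exists>c. \<forall>j<m. U y j = (\<Sum>i\<in>I. c i * B i j)) \<Longrightarrow>
    \<exists>(s::nat) d (xs::nat\<Rightarrow>'a). \<forall>y. ip m (\<lambda>j. a j - (\<Sum>l<s. d l * U (xs l) j)) (U y) = 0"
proof (induction n arbitrary: I B U)
  case 0
  then have "I = {}" by simp
  then have "\<forall>y j. j < m \<longrightarrow> U y j = 0" using 0 by auto
  then have "ip m (\<lambda>j. a j - (\<Sum>l<0. d l * U (xs l) j)) (U y) = 0" for y d xs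
    unfolding ip_def by (intro sum.neutral) auto
  then show ?case by blast
next
  case (Suc n)
  show ?case
  proof (cases "\<forall>y. ip m (U y) (U y) = 0")
    case True
    then have "\<forall>y j. j < m \<longrightarrow> U y j = 0" using ip_self_zero by blast
    then have "ip m (\<lambda>j. a j - (\<Sum>l<0. d l * U (xs l) j)) (U y) = 0" for y d xs
      unfolding ip_def by (intro sum.neutral) auto
    then show ?thesis by blast
  next
    case False
    then obtain y0 where "ip m (U y0) (U y0) \<noteq> 0" by blast
    define v0 where "v0 = U y0"
    define n0 where "n0 = ip m v0 v0"
    have n0: "n0 > 0" using \<open>ip m (U y0) (U y0) \<noteq> 0\<close> ip_self_nonneg[of m v0]
      unfolding n0_def v0_def by linarith
    obtain \<beta> where \<beta>: "\<forall>j<m. v0 j = (\<Sum>i\<in>I. \<beta> i * B i j)" using Suc.prems(3) unfolding v0_def by blast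
    obtain i0 where i0: "i0 \<in> I" "\<beta> i0 \<noteq> 0"
    proof (rule ccontr)
      assume "\<not> thesis"
      then have "\<forall>i\<in>I. \<beta> i = 0" using that by blast
      then have "\<forall>j<m. v0 j = 0" using \<beta> by simp
      then have "n0 = 0" unfolding n0_def ip_def by simp
      then show False using n0 by simp
    qed
    define perp where "perp = (\<lambda>v j. v j - (ip m v v0 / n0) * v0 j)"
    define U' where "U' = (\<lambda>y. perp (U y))"
    define B' where "B' = (\<lambda>i. perp (B i))"
    define I' where "I' = I - {i0}"
    have fI': "finite I'" "card I' = n" using Suc.prems i0 unfolding I'_def by auto
    have perp_v0: "ip m v0 (perp v) = 0" for v
    proof -
      have "ip m (perp v) v0 = ip m v v0 - (ip m v v0 / n0) * ip m v0 v0"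
        unfolding perp_def by (subst ip_diff, subst ip_scale, rule refl)
      then show ?thesis using n0 unfolding n0_def by (simp add: ip_sym)
    qed
    have span': "\<forall>y. \<exists>c. \<forall>j<m. U' y j = (\<Sum>i\<in>I'. c i * B' i j)"
    proof
      fix y
      obtain \<gamma> where \<gamma>: "\<forall>j<m. U y j = (\<Sum>i\<in>I. \<gamma> i * B i j)" using Suc.prems(3) by blast
      define \<delta> where "\<delta> = (\<lambda>i. \<gamma> i - \<gamma> i0 * \<beta> i / \<beta> i0)"
      define cc where "cc = \<gamma> i0 / \<beta> i0"
      define W where "W = (\<lambda>j. \<Sum>i\<in>I'. \<delta> i * B i j)"
      have A: "U y j = cc * v0 j + W j" if j: "j < m" for j
      proof -
        have s1: "U y j = \<gamma> i0 * B i0 j + (\<Sum>i\<in>I'. \<gamma> i * B i j)"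
          using \<gamma> j i0 Suc.prems(1) unfolding I'_def by (simp add: sum.remove)
        have s2: "v0 j = \<beta> i0 * B i0 j + (\<Sum>i\<in>I'. \<beta> i * B i j)"
          using \<beta> j i0 Suc.prems(1) unfolding I'_def by (simp add: sum.remove)
        have "W j = (\<Sum>i\<in>I'. \<gamma> i * B i j) - cc * (\<Sum>i\<in>I'. \<beta> i * B i j)"
          unfolding W_def \<delta>_def cc_def
          by (simp add: sum_distrib_left sum_subtractf left_diff_distrib mult.assoc)
        then show ?thesis using s1 s2 i0(2) unfolding cc_def by (simp add: field_simps)
      qed
      have "ip m (U y) v0 = cc * n0 + ip m W v0"
      proof -
        have "ip m (U y) v0 = ip m (\<lambda>j. cc * v0 j + W j) v0" using A by (intro ip_cong) auto
        then show ?thesis unfolding n0_def by (simp add: ip_add ip_scale)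
      qed
      then have "U' y j = perp W j" if "j < m" for j
        unfolding U'_def perp_def using A[OF that] n0 by (simp add: field_simps)
      moreover have "perp W j = (\<Sum>i\<in>I'. \<delta> i * B' i j)" for j
      proof -
        have "ip m W v0 = (\<Sum>i\<in>I'. \<delta> i * ip m (B i) v0)"
          unfolding W_def by (simp add: ip_sum ip_scale)
        then show ?thesis unfolding perp_def B'_def W_def
          by (simp add: sum_distrib_left sum_distrib_right sum_subtractf right_diff_distrib mult.assoc sum_divide_distrib)
      qed
      ultimately show "\<exists>c. \<forall>j<m. U' y j = (\<Sum>i\<in>I'. c i * B' i j)" by auto
    qed
    obtain s :: nat and d xs where IH: "\<forall>y. ip m (\<lambda>j. a j - (\<Sum>l<s. d l * U' (xs l) j)) (U' y) = 0"
      using Suc.IH[OF fI' span'] by blast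
    define P' where "P' = (\<lambda>j. \<Sum>l<s. d l * U' (xs l) j)"
    define t where "t = ip m (\<lambda>j. a j - P' j) v0 / n0"
    define cs where "cs = (\<Sum>l<s. d l * (ip m (U (xs l)) v0 / n0))"
    define d' where "d' = d(s := t - cs)"
    define xs' where "xs' = xs(s := y0)"
    have comb: "(\<Sum>l<Suc s. d' l * U (xs' l) j) = P' j + t * v0 j" for j
    proof -
      have "(\<Sum>l<Suc s. d' l * U (xs' l) j) = (\<Sum>l<s. d l * U (xs l) j) + (t - cs) * v0 j"
        unfolding d'_def xs'_def v0_def by simp
      moreover have "P' j = (\<Sum>l<s. d l * U (xs l) j) - cs * v0 j"
        unfolding P'_def U'_def perp_def cs_def
        by (simp add: sum_distrib_left sum_distrib_right sum_subtractf right_diff_distrib mult.assoc)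
      ultimately show ?thesis by (simp add: left_diff_distrib)
    qed
    have "ip m (\<lambda>j. a j - (\<Sum>l<Suc s. d' l * U (xs' l) j)) (U y) = 0" for y
    proof -
      define r where "r = (\<lambda>j. a j - P' j - t * v0 j)"
      have "ip m r v0 = ip m (\<lambda>j. a j - P' j) v0 - t * ip m v0 v0"
        unfolding r_def by (subst ip_diff, subst ip_scale, rule refl)
      then have r1: "ip m r v0 = 0"
        unfolding t_def using n0 by (simp add: n0_def[symmetric])
      have r2: "ip m r (U' y) = 0"
      proof -
        have "ip m r (U' y) = ip m (\<lambda>j. a j - P' j) (U' y) - t * ip m v0 (U' y)"
          unfolding r_def by (subst ip_diff, subst ip_scale, rule refl)
        moreover have "ip m v0 (U' y) = 0" unfolding U'_def by (rule perp_v0)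
        moreover have "ip m (\<lambda>j. a j - P' j) (U' y) = 0" using IH unfolding P'_def by blast
        ultimately show ?thesis by simp
      qed
      have "ip m r (U y) = ip m r (\<lambda>j. (ip m (U y) v0 / n0) * v0 j + U' y j)"
        unfolding U'_def perp_def by simp
      also have "\<dots> = (ip m (U y) v0 / n0) * ip m r v0 + ip m r (U' y)"
        by (subst ip_sym, subst ip_add, subst ip_scale, simp add: ip_sym)
      also have "\<dots> = 0" using r1 r2 by simp
      finally have "ip m r (U y) = 0" .
      moreover have "ip m (\<lambda>j. a j - (\<Sum>l<Suc s. d' l * U (xs' l) j)) (U y) = ip m r (U y)"
        unfolding r_def comb by (simp add: algebra_simps)
      ultimately show ?thesis by simp
    qed
    then show ?thesis by blast
  qed
qed

lemma kernel_rep: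
  fixes L :: "(real \<times> (real^'n) \<times> real) list"
  shows "\<exists>k\<in>kernel_family \<sigma>. \<exists>(s::nat) (d::nat \<Rightarrow> real) (xs::nat \<Rightarrow> real^'n).
           \<forall>x. (\<Sum>l<s. d l * k x (xs l)) = netn \<sigma> L x"
proof -
  define m where "m = length L"
  define a where "a = (\<lambda>j. fst (L ! j))"
  define w where "w = (\<lambda>j. fst (snd (L ! j)))"
  define b where "b = (\<lambda>j. snd (snd (L ! j)))"
  define U where "U = (\<lambda>(y::real^'n) j. \<sigma> (inner y (w j) + b j))"
  have span: "\<forall>y. \<exists>c. \<forall>j<m. U y j = (\<Sum>i\<in>{..<m}. c i * (\<lambda>i j. if i = j then 1 else 0) i j)"
    by (intro allI exI[of _ "U y" for y]) (auto simp: if_distrib cong: if_cong)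
  have "\<exists>s d (xs::nat\<Rightarrow>real^'n). \<forall>y. ip m (\<lambda>j. a j - (\<Sum>l<s. d l * U (xs l) j)) (U y) = 0"
    by (rule proj_lemma[OF finite_lessThan card_lessThan span])
  then obtain s :: nat and d :: "nat \<Rightarrow> real" and xs :: "nat \<Rightarrow> real^'n" where sd: "\<forall>y. ip m (\<lambda>j. a j - (\<Sum>l<s. d l * U (xs l) j)) (U y) = 0"
    by blast
  define k where "k = (\<lambda>(x::real^'n) (y::real^'n). \<Sum>j<m. (\<lambda>_. 1::real) j * \<sigma> (inner x (w j) + b j) * \<sigma> (inner y (w j) + b j))"
  have "k \<in> kernel_family \<sigma>"
    unfolding kernel_family_def k_def by (intro CollectI exI[of _ m] exI[of _ "\<lambda>_. 1::real"] exI[of _ w] exI[of _ b]) auto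
  moreover have "(\<Sum>l<s. d l * k x (xs l)) = netn \<sigma> L x" for x
  proof -
    define E where "E = (\<lambda>j. \<Sum>l<s. d l * U (xs l) j)"
    have "(\<Sum>l<s. d l * k x (xs l)) = ip m E (U x)"
      unfolding k_def E_def ip_def U_def
      by (simp add: sum_distrib_left sum_distrib_right sum.swap[of _ "{..<s}"] mult_ac)
    moreover have "netn \<sigma> L x = ip m a (U x)"
    proof -
      have "netn \<sigma> L x = (\<Sum>j = 0..<length L. (\<lambda>(a,w,b). a * \<sigma> (inner x w + b)) (L ! j))"
        unfolding netn_def by (simp add: sum_list_sum_nth)
      also have "\<dots> = ip m a (U x)"
        unfolding ip_def m_def a_def U_def w_def b_def atLeast0LessThan
        by (intro sum.cong) (auto simp: case_prod_beta)
      finally show ?thesis .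
    qed
    moreover have "ip m (\<lambda>j. a j - E j) (U x) = 0" using sd unfolding E_def by blast
    ultimately show ?thesis by (simp add: ip_diff)
  qed
  ultimately show ?thesis by blast
qed

theorem theorem5p3:
  fixes \<sigma> :: "real \<Rightarrow> real"
    and f :: "real^'n \<Rightarrow> real"
    and K :: "(real^'n) set"
    and \<epsilon> :: real
  assumes "continuous_on UNIV \<sigma>"
    and "\<not> is_polynomial_fun \<sigma>"
    and "continuous_on UNIV f"
    and "compact K"
    and "\<epsilon> > 0"
  shows "\<exists>k \<in> kernel_family \<sigma>. \<exists>(s::nat) (d::nat \<Rightarrow> real) (xs::nat \<Rightarrow> real^'n).
           (\<forall>x\<in>K. \<bar>f x - (\<Sum>l<s. d l * k x (xs l))\<bar> < \<epsilon>)"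
proof -
  obtain L where L: "\<forall>x\<in>K. \<bar>f x - netn \<sigma> L x\<bar> < \<epsilon>"
    using net_approx[OF good_exp[OF assms(1,2)] assms(4,3,5)] by blast
  obtain k and s :: nat and d :: "nat \<Rightarrow> real" and xs :: "nat \<Rightarrow> real^'n" where k: "k \<in> kernel_family \<sigma>" "\<forall>x. (\<Sum>l<s. d l * k x (xs l)) = netn \<sigma> L x"
    using kernel_rep[of \<sigma> L] by blast
  show ?thesis using L k by (intro bexI[of _ k] exI[of _ s] exI[of _ d] exI[of _ xs]) auto
qed

end
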